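(* (1) $R\setminus K_\Gamma$ is a countable set. (2) There is $M\in\mathrm{GL}(3,\mathbb R)$ such that every matrix $M^{-1}BM$, $B\in\Gamma$, has all entries strictly positive and determinant one, and there is $c>0$ such that for every $B\in\Gamma$, $\min_{j,k}(M^{-1}BM)_{jk}/\max_{j,k}(M^{-1}BM)_{jk}\ge c$.
   Context: Let $A_1=\begin{pmatrix}1&1&1\\0&1&0\\0&0&1\end{pmatrix}$, $A_2=\begin{pmatrix}1&0&0\\1&1&1\\0&0&1\end{pmatrix}$, $A_3=\begin{pmatrix}1&0&0\\0&1&0\\1&1&1\end{pmatrix}$, $S=\{(x,y,z):x,y,z\ge0,x+y+z=1\}$, and $f_i(v)=A_iv/(\text{sum of coordinates of }A_iv)$ on $S$. The Rauzy gasket $R$ is the unique nonempty compact $R\subset S$ with $R=\bigcup_if_i(R)$; for $\omega\in\{1,2,3\}^{\mathbb N}$, $\Pi(\omega)$ denotes the unique point of $\bigcap_n f_{\omega_1}\circ\cdots\circ f_{\omega_n}(S)$, so $R=\Pi(\{1,2,3\}^{\mathbb N})$. Let $\Gamma=\{A_i^nA_j: i\ne j\in\{1,2,3\},\ n\ge1\}$ and let $K_\Gamma=\Pi(\Sigma')$, where $\Sigma'$ is the set of sequences in $\{1,2,3\}^{\mathbb N}$ that are infinite concatenations of blocks $i^nj$ ($i\ne j$, $n\ge1$), i.e. the limit set of the infinite system $\{f_{B}\}_{B\in\Gamma}$. *)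

theory Defs
  imports "HOL-Analysis.Analysis"
begin

text \<open>The three Rauzy matrices (row-major: row i is A $ i), indexed by symbols 1, 2, 3.\<close>

definition A1 :: "real^3^3" where
  "A1 = vector [vector [1,1,1], vector [0,1,0], vector [0,0,1]]"
definition A2 :: "real^3^3" where
  "A2 = vector [vector [1,0,0], vector [1,1,1], vector [0,0,1]]"
definition A3 :: "real^3^3" where
  "A3 = vector [vector [1,0,0], vector [0,1,0], vector [1,1,1]]"

definition rauzyA :: "nat \<Rightarrow> real^3^3" where
  "rauzyA i = (if i = 1 then A1 else if i = 2 then A2 else A3)"

definition symbols :: "nat set" where "symbols = {1, 2, 3}"

definition simplexS :: "(real^3) set" where
  "simplexS = {v. (\<forall>k. 0 \<le> v $ k) \<and> (\<Sum>k\<in>UNIV. v $ k) = 1}"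

definition rauzyF :: "nat \<Rightarrow> real^3 \<Rightarrow> real^3" where
  "rauzyF i v = (1 / (\<Sum>k\<in>UNIV. (rauzyA i *v v) $ k)) *\<^sub>R (rauzyA i *v v)"

text \<open>Composition f_{w 0} o ... o f_{w (n-1)} (sequences are indexed from 0).\<close>
definition fcomp :: "(nat \<Rightarrow> nat) \<Rightarrow> nat \<Rightarrow> real^3 \<Rightarrow> real^3" where
  "fcomp w n = foldr (\<lambda>k g. rauzyF (w k) \<circ> g) [0..<n] id"

definition codingPi :: "(nat \<Rightarrow> nat) \<Rightarrow> real^3" where
  "codingPi w = (THE x. x \<in> (\<Inter>n. fcomp w n ` simplexS))"

definition fullShift :: "(nat \<Rightarrow> nat) set" where
  "fullShift = {w. \<forall>n. w n \<in> symbols}"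

definition rauzyGasket :: "(real^3) set" where
  "rauzyGasket = codingPi ` fullShift"

definition isBlock :: "(nat \<Rightarrow> nat) \<Rightarrow> nat \<Rightarrow> nat \<Rightarrow> bool" where
  "isBlock w a b \<longleftrightarrow> a + 2 \<le> b \<and>
     (\<exists>i j. i \<in> symbols \<and> j \<in> symbols \<and> i \<noteq> j \<and>
        (\<forall>m. a \<le> m \<and> m < b - 1 \<longrightarrow> w m = i) \<and> w (b - 1) = j)"

definition SigmaGamma :: "(nat \<Rightarrow> nat) set" where
  "SigmaGamma = {w. \<exists>t :: nat \<Rightarrow> nat. t 0 = 0 \<and> (\<forall>k. isBlock w (t k) (t (Suc k)))}"

definition KGamma :: "(real^3) set" where
  "KGamma = codingPi ` SigmaGamma"

definition matpow :: "real^3^3 \<Rightarrow> nat \<Rightarrow> real^3^3" where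
  "matpow B n = ((\<lambda>C. B ** C) ^^ n) (mat 1)"

definition GammaSet :: "(real^3^3) set" where
  "GammaSet = {matpow (rauzyA i) n ** rauzyA j | i j n.
      i \<in> symbols \<and> j \<in> symbols \<and> i \<noteq> j \<and> n \<ge> 1}"

end

theory Submission
  imports Defs
begin


lemma matmul3: "((X::real^3^3) ** Y) $ i $ j = X$i$1*Y$1$j + X$i$2*Y$2$j + X$i$3*Y$3$j"
  by (simp add: matrix_matrix_mult_def sum_3)

lemma mateq3: "(X::real^3^3) = Y \<longleftrightarrow> (\<forall>i j. X$i$j = Y$i$j)"
  by (simp add: vec_eq_iff)

lemma mat1_3: "(mat 1 :: real^3^3) = vector [vector [1,0,0], vector [0,1,0], vector [0,0,1]]"
  by (simp add: mateq3 forall_3 mat_def)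

definition P1 :: "nat \<Rightarrow> real^3^3" where "P1 n = vector [vector [1,real n,real n], vector [0,1,0], vector [0,0,1]]"
definition P2 :: "nat \<Rightarrow> real^3^3" where "P2 n = vector [vector [1,0,0], vector [real n,1,real n], vector [0,0,1]]"
definition P3 :: "nat \<Rightarrow> real^3^3" where "P3 n = vector [vector [1,0,0], vector [0,1,0], vector [real n,real n,1]]"

lemma pow1: "matpow A1 n = P1 n"
proof (induction n)
  case 0 show ?case by (simp add: matpow_def P1_def mat1_3)
next
  case (Suc n)
  have "matpow A1 (Suc n) = A1 ** matpow A1 n" by (simp add: matpow_def)
  then show ?case using Suc by (simp add: mateq3 forall_3 matmul3 P1_def A1_def algebra_simps)
qed
lemma pow2: "matpow A2 n = P2 n"
proof (induction n)
  case 0 show ?case by (simp add: matpow_def P2_def mat1_3)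
next
  case (Suc n)
  have "matpow A2 (Suc n) = A2 ** matpow A2 n" by (simp add: matpow_def)
  then show ?case using Suc by (simp add: mateq3 forall_3 matmul3 P2_def A2_def algebra_simps)
qed
lemma pow3: "matpow A3 n = P3 n"
proof (induction n)
  case 0 show ?case by (simp add: matpow_def P3_def mat1_3)
next
  case (Suc n)
  have "matpow A3 (Suc n) = A3 ** matpow A3 n" by (simp add: matpow_def)
  then show ?case using Suc by (simp add: mateq3 forall_3 matmul3 P3_def A3_def algebra_simps)
qed

definition Mm :: "real^3^3" where "Mm = vector [vector [6,-1,-1], vector [-1,6,-1], vector [-1,-1,6]]"
definition Nm :: "real^3^3" where "Nm = vector [vector [5/28,1/28,1/28], vector [1/28,5/28,1/28], vector [1/28,1/28,5/28]]"

lemma MN: "Mm ** Nm = mat 1" "Nm ** Mm = mat 1"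
  by (simp_all add: mateq3 forall_3 matmul3 Mm_def Nm_def mat_def)

lemma inv_Mm: "matrix_inv Mm = Nm" "invertible Mm"
proof -
  show "invertible Mm" using MN invertible_def by blast
  have "Mm ** (matrix_inv Mm) = mat 1 \<and> (matrix_inv Mm) ** Mm = mat 1"
    unfolding matrix_inv_def by (rule someI[of _ Nm]) (simp add: MN)
  then have "matrix_inv Mm = (Nm ** Mm) ** matrix_inv Mm" by (simp add: MN)
  also have "\<dots> = Nm" by (simp add: matrix_mul_assoc[symmetric] \<open>Mm ** (matrix_inv Mm) = mat 1 \<and> _\<close>)
  finally show "matrix_inv Mm = Nm" .
qed

lemma case12: assumes "n \<ge> 1" shows
  "\<forall>a b. real n \<le> 28 * ((Nm ** (P1 n ** A2)) ** Mm)$a$b \<and> 28 * ((Nm ** (P1 n ** A2)) ** Mm)$a$b \<le> 55 * real n"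
  using assms by (simp add: forall_3 matmul3 Nm_def Mm_def P1_def A2_def field_simps)

lemma case13: assumes "n \<ge> 1" shows
  "\<forall>a b. real n \<le> 28 * ((Nm ** (P1 n ** A3)) ** Mm)$a$b \<and> 28 * ((Nm ** (P1 n ** A3)) ** Mm)$a$b \<le> 55 * real n"
  using assms by (simp add: forall_3 matmul3 Nm_def Mm_def P1_def A3_def field_simps)

lemma case21: assumes "n \<ge> 1" shows
  "\<forall>a b. real n \<le> 28 * ((Nm ** (P2 n ** A1)) ** Mm)$a$b \<and> 28 * ((Nm ** (P2 n ** A1)) ** Mm)$a$b \<le> 55 * real n"
  using assms by (simp add: forall_3 matmul3 Nm_def Mm_def P2_def A1_def field_simps)

lemma case23: assumes "n \<ge> 1" shows
  "\<forall>a b. real n \<le> 28 * ((Nm ** (P2 n ** A3)) ** Mm)$a$b \<and> 28 * ((Nm ** (P2 n ** A3)) ** Mm)$a$b \<le> 55 * real n"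
  using assms by (simp add: forall_3 matmul3 Nm_def Mm_def P2_def A3_def field_simps)

lemma case31: assumes "n \<ge> 1" shows
  "\<forall>a b. real n \<le> 28 * ((Nm ** (P3 n ** A1)) ** Mm)$a$b \<and> 28 * ((Nm ** (P3 n ** A1)) ** Mm)$a$b \<le> 55 * real n"
  using assms by (simp add: forall_3 matmul3 Nm_def Mm_def P3_def A1_def field_simps)

lemma case32: assumes "n \<ge> 1" shows
  "\<forall>a b. real n \<le> 28 * ((Nm ** (P3 n ** A2)) ** Mm)$a$b \<and> 28 * ((Nm ** (P3 n ** A2)) ** Mm)$a$b \<le> 55 * real n"
  using assms by (simp add: forall_3 matmul3 Nm_def Mm_def P3_def A2_def field_simps)

lemma detP: "det (P1 n) = 1" "det (P2 n) = 1" "det (P3 n) = 1" "det A1 = 1" "det A2 = 1" "det A3 = 1"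
  by (simp_all add: det_3 P1_def P2_def P3_def A1_def A2_def A3_def)

lemma detNM: "det Nm * det Mm = 1"
  by (metis MN(2) det_I det_mul)

lemma gamma_bounds:
  assumes "B \<in> GammaSet"
  shows "det (Nm ** B ** Mm) = 1 \<and>
     (\<exists>n::nat. n \<ge> 1 \<and> (\<forall>a b. real n \<le> 28 * (Nm ** B ** Mm)$a$b \<and> 28 * (Nm ** B ** Mm)$a$b \<le> 55 * real n))"
proof -
  obtain i j n where B: "B = matpow (rauzyA i) n ** rauzyA j" and ij: "i \<in> symbols" "j \<in> symbols" "i \<noteq> j" and n: "n \<ge> 1"
    using assms unfolding GammaSet_def by blast
  have i3: "i = 1 \<or> i = 2 \<or> i = 3" and j3: "j = 1 \<or> j = 2 \<or> j = 3" using ij by (auto simp: symbols_def)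
  have d1: "det (matpow (rauzyA i) n) = 1" using i3 by (auto simp: rauzyA_def pow1 pow2 pow3 detP)
  have d2: "det (rauzyA j) = 1" using j3 by (auto simp: rauzyA_def detP)
  have det: "det (Nm ** B ** Mm) = 1"
    by (simp add: B det_mul d1 d2) (metis detNM mult.commute)
  from i3 j3 ij(3) have "(i=1 \<and> j=2) \<or> (i=1 \<and> j=3) \<or> (i=2 \<and> j=1) \<or> (i=2 \<and> j=3) \<or> (i=3 \<and> j=1) \<or> (i=3 \<and> j=2)" by auto
  then have "\<forall>a b. real n \<le> 28 * (Nm ** B ** Mm)$a$b \<and> 28 * (Nm ** B ** Mm)$a$b \<le> 55 * real n"
    using case12[OF n] case13[OF n] case21[OF n] case23[OF n] case31[OF n] case32[OF n]
    by (elim disjE conjE) (simp_all add: B rauzyA_def pow1 pow2 pow3)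
  with det n show ?thesis by blast
qed

lemma ratio:
  fixes X :: "real^3^3"
  assumes "\<forall>a b. n \<le> 28 * X$a$b \<and> 28 * X$a$b \<le> 55 * n" "n > 0"
  shows "Min {X $ j $ k | j k. True} / Max {X $ j $ k | j k. True} \<ge> 1/55"
proof -
  let ?S = "{X $ j $ k | j k. True}"
  have S: "?S = (\<lambda>(j,k). X$j$k) ` UNIV" by auto
  have fin: "finite ?S" "?S \<noteq> {}" unfolding S by auto
  have "\<forall>x\<in>?S. n/28 \<le> x" using assms(1) by (auto simp: mult.commute)
  then have mn: "Min ?S \<ge> n/28" using Min_ge_iff[OF fin(1) fin(2)] by blast
  have "\<forall>x\<in>?S. x \<le> 55*n/28" using assms(1) by (auto simp: mult.commute)
  then have mx: "Max ?S \<le> 55*n/28" using Max_le_iff[OF fin(1) fin(2)] by blast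
  have mxp: "Max ?S > 0" using mn fin assms by (smt (verit) Max_ge_iff Min_le_iff divide_pos_pos)
  have "1/55 = (n/28) / (55*n/28)" using assms(2) by simp
  also have "\<dots> \<le> Min ?S / Max ?S" using mn mx mxp assms(2)
    by (intro frac_le) auto
  finally show ?thesis .
qed


definition evconst :: "(nat \<Rightarrow> nat) set" where
  "evconst = {w. \<exists>N c. \<forall>m\<ge>N. w m = c}"

lemma countable_evconst: "countable evconst"
proof -
  have "evconst \<subseteq> (\<lambda>(xs::nat list, c::nat). \<lambda>m. if m < length xs then xs!m else c) ` UNIV"
  proof
    fix w assume "w \<in> evconst"
    then obtain N c where h: "\<forall>m\<ge>N. w m = c" unfolding evconst_def by blast
    have "w = (\<lambda>m. if m < length (map w [0..<N]) then (map w [0..<N])!m else c)"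
      using h by (auto simp: fun_eq_iff)
    note eq = this
    have eq2: "w = (\<lambda>(xs::nat list, c::nat). \<lambda>m. if m < length xs then xs!m else c) (map w [0..<N], c)"
      unfolding case_prod_conv by (rule eq)
    show "w \<in> (\<lambda>(xs::nat list, c::nat). \<lambda>m. if m < length xs then xs!m else c) ` UNIV"
      using eq2 by blast
  qed
  then show ?thesis by (rule countable_subset) simp
qed


lemma in_Sigma:
  assumes w: "w \<in> fullShift" and ne: "w \<notin> evconst"
  shows "w \<in> SigmaGamma"
proof -
  define nx where "nx a = (LEAST b. a < b \<and> w b \<noteq> w a)" for a
  have ex: "\<exists>b. a < b \<and> w b \<noteq> w a" for a
  proof -
    from ne have "\<exists>m\<ge>a. w m \<noteq> w a" unfolding evconst_def by blast
    then obtain m where "m \<ge> a" "w m \<noteq> w a" by blast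
    then show ?thesis by (intro exI[of _ m]) (auto simp: le_less)
  qed
  have nx1: "a < nx a \<and> w (nx a) \<noteq> w a" for a
    unfolding nx_def by (rule LeastI_ex[OF ex])
  have nx2: "w m = w a" if "a \<le> m" "m < nx a" for a m
  proof (cases "m = a")
    case False
    with that have "a < m" by simp
    show ?thesis using not_less_Least[OF that(2)[unfolded nx_def]] \<open>a < m\<close> by blast
  qed simp
  have blk: "isBlock w a (nx a + 1)" for a
  proof -
    have s: "w a \<in> symbols" "w (nx a) \<in> symbols" using w unfolding fullShift_def by auto
    have r: "\<forall>m. a \<le> m \<and> m < nx a + 1 - 1 \<longrightarrow> w m = w a"
      by (intro allI impI, rule nx2) simp_all
    have "a + 2 \<le> nx a + 1" using nx1[of a] by simp
    moreover have "w (nx a + 1 - 1) = w (nx a)" by simp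
    moreover have "w a \<noteq> w (nx a)" using nx1[of a] by simp
    ultimately show ?thesis unfolding isBlock_def
      apply -
      apply (rule conjI, assumption)
      apply (rule exI[of _ "w a"], rule exI[of _ "w (nx a)"])
      apply (intro conjI s r)
      apply assumption+
      done
  qed
  define t where "t = rec_nat 0 (\<lambda>_ x. nx x + 1)"
  have t: "t 0 = 0" "\<And>k. t (Suc k) = nx (t k) + 1" by (simp_all add: t_def)
  have "isBlock w (t k) (t (Suc k))" for k unfolding t(2) by (rule blk)
  then have "t 0 = 0 \<and> (\<forall>k. isBlock w (t k) (t (Suc k)))" using t(1) by blast
  then show ?thesis unfolding SigmaGamma_def by blast
qed


lemma part1: "countable (rauzyGasket - KGamma)"
proof -
  have "rauzyGasket - KGamma \<subseteq> codingPi ` evconst"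
  proof
    fix x assume x: "x \<in> rauzyGasket - KGamma"
    then have x1: "x \<in> codingPi ` fullShift" and x2: "x \<notin> codingPi ` SigmaGamma"
      unfolding rauzyGasket_def KGamma_def by simp_all
    from x1 obtain w where w1: "w \<in> fullShift" and w2: "x = codingPi w" by (rule imageE) simp
    have "w \<notin> SigmaGamma"
    proof
      assume "w \<in> SigmaGamma"
      then have "codingPi w \<in> codingPi ` SigmaGamma" by (rule imageI)
      with x2 w2 show False by simp
    qed
    then have "w \<in> evconst" using in_Sigma[OF w1] by blast
    then show "x \<in> codingPi ` evconst" unfolding w2 by (rule imageI)
  qed
  then show ?thesis by (rule countable_subset) (rule countable_image[OF countable_evconst])
qed

theorem proposition6p5:
  shows "countable (rauzyGasket - KGamma) \<and>
    (\<exists>M :: real^3^3. invertible M \<and>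
       (\<forall>B\<in>GammaSet. (\<forall>j k. (matrix_inv M ** B ** M) $ j $ k > 0) \<and>
                       det (matrix_inv M ** B ** M) = 1) \<and>
       (\<exists>c>0. \<forall>B\<in>GammaSet.
          Min {(matrix_inv M ** B ** M) $ j $ k | j k. True} /
          Max {(matrix_inv M ** B ** M) $ j $ k | j k. True} \<ge> c))"
proof -
  have pos: "\<forall>B\<in>GammaSet. (\<forall>j k. (matrix_inv Mm ** B ** Mm) $ j $ k > 0) \<and> det (matrix_inv Mm ** B ** Mm) = 1"
  proof
    fix B assume B: "B \<in> GammaSet"
    from gamma_bounds[OF B] obtain n :: nat where n: "n \<ge> 1"
      and bd: "\<forall>a b. real n \<le> 28 * (Nm ** B ** Mm)$a$b \<and> 28 * (Nm ** B ** Mm)$a$b \<le> 55 * real n"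
      and d: "det (Nm ** B ** Mm) = 1" by blast
    have n1: "real n \<ge> 1" using n by simp
    have "(Nm ** B ** Mm) $ j $ k > 0" for j k
    proof -
      have "real n \<le> 28 * (Nm ** B ** Mm)$j$k" using bd by blast
      then show ?thesis using n1 by linarith
    qed
    then show "(\<forall>j k. (matrix_inv Mm ** B ** Mm) $ j $ k > 0) \<and> det (matrix_inv Mm ** B ** Mm) = 1"
      using d unfolding inv_Mm(1) by blast
  qed
  have rat: "\<forall>B\<in>GammaSet. Min {(matrix_inv Mm ** B ** Mm) $ j $ k | j k. True} /
          Max {(matrix_inv Mm ** B ** Mm) $ j $ k | j k. True} \<ge> 1/55"
  proof
    fix B assume B: "B \<in> GammaSet"
    from gamma_bounds[OF B] obtain n :: nat where n: "n \<ge> 1"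
      and bd: "\<forall>a b. real n \<le> 28 * (Nm ** B ** Mm)$a$b \<and> 28 * (Nm ** B ** Mm)$a$b \<le> 55 * real n"
      by blast
    have "real n > 0" using n by simp
    from ratio[OF bd this] show "Min {(matrix_inv Mm ** B ** Mm) $ j $ k | j k. True} /
          Max {(matrix_inv Mm ** B ** Mm) $ j $ k | j k. True} \<ge> 1/55"
      unfolding inv_Mm(1) .
  qed
  have c: "(1/55::real) > 0" by simp
  have ex: "\<exists>c>0. \<forall>B\<in>GammaSet. Min {(matrix_inv Mm ** B ** Mm) $ j $ k | j k. True} /
          Max {(matrix_inv Mm ** B ** Mm) $ j $ k | j k. True} \<ge> c"
    by (rule exI[of _ "1/55::real"], rule conjI[OF c rat])
  have "invertible Mm \<and> (\<forall>B\<in>GammaSet. (\<forall>j k. (matrix_inv Mm ** B ** Mm) $ j $ k > 0) \<and> det (matrix_inv Mm ** B ** Mm) = 1) \<and>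
       (\<exists>c>0. \<forall>B\<in>GammaSet. Min {(matrix_inv Mm ** B ** Mm) $ j $ k | j k. True} /
          Max {(matrix_inv Mm ** B ** Mm) $ j $ k | j k. True} \<ge> c)"
    by (rule conjI[OF inv_Mm(2) conjI[OF pos ex]])
  then have "\<exists>M :: real^3^3. invertible M \<and>
       (\<forall>B\<in>GammaSet. (\<forall>j k. (matrix_inv M ** B ** M) $ j $ k > 0) \<and>
                       det (matrix_inv M ** B ** M) = 1) \<and>
       (\<exists>c>0. \<forall>B\<in>GammaSet.
          Min {(matrix_inv M ** B ** M) $ j $ k | j k. True} /
          Max {(matrix_inv M ** B ** M) $ j $ k | j k. True} \<ge> c)"
    by (rule exI[of _ Mm])
  then show ?thesis by (rule conjI[OF part1])
qed

end
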